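(* Let $U\in\mathbb{N}$ and $a_1,a_2,b_1,b_2\in\mathbb{Q}_U[\mathbf{i}]$ with $a_1\neq a_2$ and $b_1\neq b_2$. If there exist $\rho,t\in\mathbb{C}$ with $|\rho|=1$ and $b_j=\rho a_j+t$ for $j\in\{1,2\}$, then $\rho\in\mathbb{Q}_{2^{10}U^{16}}[\mathbf{i}]$ and $t\in\mathbb{Q}_{2^{22}U^{35}}[\mathbf{i}]$.
   Context: For $V\in\mathbb{N}$, $\mathbb{Q}_V=\{\pm p/q: p,q\in\{1,\dots,V\}\}\cup\{0\}$ and $\mathbb{Q}_V[\mathbf{i}]=\{x+y\mathbf{i}: x,y\in\mathbb{Q}_V\}$. *)

theory Defs
  imports "HOL-Analysis.Analysis"
begin

definition QV :: "nat \<Rightarrow> real set" where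
  "QV V = {x. x = 0 \<or> (\<exists>p\<in>{1..V}. \<exists>q\<in>{1..V}. x = real p / real q \<or> x = - (real p / real q))}"

definition QVi :: "nat \<Rightarrow> complex set" where
  "QVi V = {z. Re z \<in> QV V \<and> Im z \<in> QV V}"

end

theory Submission
  imports Defs
begin

definition BR :: "nat \<Rightarrow> nat \<Rightarrow> real set" where
  "BR N D = {x. \<exists>n::int. \<exists>d::nat. x = of_int n / of_nat d \<and> \<bar>n\<bar> \<le> int N \<and> 1 \<le> d \<and> d \<le> D}"

lemma QV_BR:
  assumes "x \<in> QV U" "1 \<le> U" shows "x \<in> BR U U"
proof -
  consider "x = 0" | p q where "p \<in> {1..U}" "q \<in> {1..U}" "x = real p / real q \<or> x = - (real p / real q)"
    using assms(1) unfolding QV_def by blast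
  then show ?thesis
  proof cases
    case 1
    then show ?thesis unfolding BR_def using assms(2)
      by (intro CollectI exI[of _ 0] exI[of _ 1]) auto
  next
    case 2
    from 2(3) show ?thesis
    proof (elim disjE)
      assume "x = real p / real q"
      then show ?thesis using 2 unfolding BR_def
        by (intro CollectI exI[of _ "int p"] exI[of _ q]) auto
    next
      assume "x = - (real p / real q)"
      then show ?thesis using 2 unfolding BR_def
        by (intro CollectI exI[of _ "- int p"] exI[of _ q]) auto
    qed
  qed
qed

lemma BR_QV:
  assumes "x \<in> BR N D" "N \<le> V" "D \<le> V" shows "x \<in> QV V"
proof -
  obtain n :: int and d :: nat where h: "x = of_int n / of_nat d" "\<bar>n\<bar> \<le> int N" "1 \<le> d" "d \<le> D"
    using assms(1) unfolding BR_def by blast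
  consider "n = 0" | "n > 0" | "n < 0" by linarith
  then show ?thesis
  proof cases
    case 1 then show ?thesis using h unfolding QV_def by simp
  next
    case 2
    have "x = real (nat n) / real d" using h 2 by simp
    moreover have "nat n \<in> {1..V}" "d \<in> {1..V}" using h 2 assms by auto
    ultimately show ?thesis unfolding QV_def by blast
  next
    case 3
    have "x = - (real (nat (-n)) / real d)" using h 3 by simp
    moreover have "nat (-n) \<in> {1..V}" "d \<in> {1..V}" using h 3 assms by auto
    ultimately show ?thesis unfolding QV_def by blast
  qed
qed

lemma BR_add:
  assumes "x \<in> BR N1 D1" "y \<in> BR N2 D2" "N1*D2+N2*D1 \<le> N" "D1*D2 \<le> D"
  shows "x + y \<in> BR N D" "x - y \<in> BR N D"
proof -
  obtain n1 :: int and d1 :: nat where h1: "x = of_int n1 / of_nat d1" "\<bar>n1\<bar> \<le> int N1" "1 \<le> d1" "d1 \<le> D1"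
    using assms(1) unfolding BR_def by blast
  obtain n2 :: int and d2 :: nat where h2: "y = of_int n2 / of_nat d2" "\<bar>n2\<bar> \<le> int N2" "1 \<le> d2" "d2 \<le> D2"
    using assms(2) unfolding BR_def by blast
  have dd: "d1*d2 \<le> D1*D2" using h1 h2 by (simp add: mult_le_mono)
  have d1: "1 \<le> d1*d2" using h1 h2 by simp
  have b1: "\<bar>n1 * int d2\<bar> \<le> int N1 * int D2"
    using h1 h2 by (simp add: abs_mult mult_mono)
  have b2: "\<bar>n2 * int d1\<bar> \<le> int N2 * int D1"
    using h1 h2 by (simp add: abs_mult mult_mono)
  have NN: "int N1 * int D2 + int N2 * int D1 \<le> int N" using assms(3)
    by (metis of_nat_add of_nat_le_iff of_nat_mult)
  have s: "\<bar>n1 * int d2 + n2 * int d1\<bar> \<le> int N" "\<bar>n1 * int d2 - n2 * int d1\<bar> \<le> int N"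
    using b1 b2 NN by linarith+
  have "x + y = of_int (n1 * int d2 + n2 * int d1) / of_nat (d1*d2)"
    using h1 h2 by (simp add: field_simps)
  then show "x + y \<in> BR N D" unfolding BR_def using s dd d1 assms(4)
    by (intro CollectI exI[of _ "n1 * int d2 + n2 * int d1"] exI[of _ "d1*d2"]) auto
  have "x - y = of_int (n1 * int d2 - n2 * int d1) / of_nat (d1*d2)"
    using h1(3) h2(3) unfolding h1(1) h2(1) by (simp add: field_simps)
  then show "x - y \<in> BR N D" unfolding BR_def using s dd d1 assms(4)
    by (intro CollectI exI[of _ "n1 * int d2 - n2 * int d1"] exI[of _ "d1*d2"]) auto
qed

lemma BR_mult:
  assumes "x \<in> BR N1 D1" "y \<in> BR N2 D2" "N1*N2 \<le> N" "D1*D2 \<le> D"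
  shows "x * y \<in> BR N D"
proof -
  obtain n1 :: int and d1 :: nat where h1: "x = of_int n1 / of_nat d1" "\<bar>n1\<bar> \<le> int N1" "1 \<le> d1" "d1 \<le> D1"
    using assms(1) unfolding BR_def by blast
  obtain n2 :: int and d2 :: nat where h2: "y = of_int n2 / of_nat d2" "\<bar>n2\<bar> \<le> int N2" "1 \<le> d2" "d2 \<le> D2"
    using assms(2) unfolding BR_def by blast
  have dd: "d1*d2 \<le> D1*D2" using h1 h2 by (simp add: mult_le_mono)
  have d1: "1 \<le> d1*d2" using h1 h2 by simp
  have b1: "\<bar>n1 * n2\<bar> \<le> int N1 * int N2"
    using h1 h2 by (simp add: abs_mult mult_mono)
  have NN: "int N1 * int N2 \<le> int N" using assms(3)
    by (metis of_nat_le_iff of_nat_mult)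
  have "x * y = of_int (n1 * n2) / of_nat (d1*d2)"
    using h1 h2 by simp
  then show ?thesis unfolding BR_def using b1 NN dd d1 assms(4)
    by (intro CollectI exI[of _ "n1 * n2"] exI[of _ "d1*d2"]) auto
qed

lemma BR_divide:
  assumes "x \<in> BR N1 D1" "y \<in> BR N2 D2" "y \<noteq> 0" "N1*D2 \<le> N" "D1*N2 \<le> D"
  shows "x / y \<in> BR N D"
proof -
  obtain n1 :: int and d1 :: nat where h1: "x = of_int n1 / of_nat d1" "\<bar>n1\<bar> \<le> int N1" "1 \<le> d1" "d1 \<le> D1"
    using assms(1) unfolding BR_def by blast
  obtain n2 :: int and d2 :: nat where h2: "y = of_int n2 / of_nat d2" "\<bar>n2\<bar> \<le> int N2" "1 \<le> d2" "d2 \<le> D2"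
    using assms(2) unfolding BR_def by blast
  have n2: "n2 \<noteq> 0" using assms(3) h2 by auto
  define m where "m = nat \<bar>n2\<bar>"
  have m1: "1 \<le> m" "m \<le> N2" using n2 h2 unfolding m_def by auto
  have dd: "d1*m \<le> D1*N2" using h1 m1 by (simp add: mult_le_mono)
  have d1: "1 \<le> d1*m" using h1 m1 by simp
  have ab: "\<bar>n1 * int d2 * sgn n2\<bar> = \<bar>n1\<bar> * int d2" using n2 by (simp add: abs_mult)
  have b1: "\<bar>n1 * int d2 * sgn n2\<bar> \<le> int N1 * int D2"
    unfolding ab using h1 h2 by (simp add: mult_mono)
  have NN: "int N1 * int D2 \<le> int N" using assms(4)
    by (metis of_nat_le_iff of_nat_mult)
  have mm: "real m = of_int (sgn n2) * of_int n2" unfolding m_def using n2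
    by (cases "n2 > 0") auto
  have "x / y = of_int (n1 * int d2 * sgn n2) / of_nat (d1*m)"
  proof -
    have r: "real (d1*m) = real d1 * (of_int (sgn n2) * of_int n2)" using mm by simp
    show ?thesis unfolding r h1(1) h2(1) using h1(3) h2(3) n2
      by (cases "n2 > 0") (auto simp: field_simps)
  qed
  then show ?thesis unfolding BR_def using b1 NN dd d1 assms(5)
    by (intro CollectI exI[of _ "n1 * int d2 * sgn n2"] exI[of _ "d1*m"]) auto
qed

lemma QV0: "QV 0 = {0}" unfolding QV_def by auto

lemma T0: "(U::nat)*U + U*U \<le> 2*U^2" by (simp add: power2_eq_square)

lemma T1: "2*(U::nat)^2*U^2 \<le> 4*U^4" "4*U^4*U^4 + 4*U^4*U^4 \<le> 8*U^8"
  "U^2*U^2 \<le> U^4" "U^4*U^4 \<le> U^8"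
  "8*U^8*U^8 \<le> 8*U^16" "U^8*(8*U^8) \<le> 8*U^16"
  "8*U^16*U \<le> 8*U^17" "8*U^16*U \<le> 8*U^17"
  "8*U^17*(8*U^17) + 8*U^17*(8*U^17) \<le> 128*U^34" "8*U^17*(8*U^17) \<le> 64*U^34"
  "U*(64*U^34) + 128*U^34*U \<le> 192*U^35" "U*(64*U^34) \<le> 64*U^35"
  by (simp_all add: algebra_simps flip: power_add power_Suc)

theorem corollary2p3:
  fixes U :: nat and a1 a2 b1 b2 \<rho> t :: complex
  assumes "a1 \<in> QVi U" "a2 \<in> QVi U" "b1 \<in> QVi U" "b2 \<in> QVi U"
    and "a1 \<noteq> a2" "b1 \<noteq> b2"
    and "cmod \<rho> = 1" "b1 = \<rho> * a1 + t" "b2 = \<rho> * a2 + t"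
  shows "\<rho> \<in> QVi (2^10 * U^16) \<and> t \<in> QVi (2^22 * U^35)"
proof -
  have U1: "1 \<le> U"
  proof (rule ccontr)
    assume "\<not> 1 \<le> U" then have "U = 0" by simp
    then have "a1 = 0" "a2 = 0" using assms(1,2) by (auto simp: QVi_def QV0 complex_eq_iff)
    then show False using assms(5) by simp
  qed
  have q: "Re a1 \<in> BR U U" "Im a1 \<in> BR U U" "Re a2 \<in> BR U U" "Im a2 \<in> BR U U"
     "Re b1 \<in> BR U U" "Im b1 \<in> BR U U" "Re b2 \<in> BR U U" "Im b2 \<in> BR U U"
    using assms(1-4) U1 unfolding QVi_def by (auto intro: QV_BR)
  define A where "A = a1 - a2"
  define B where "B = b1 - b2"
  have A0: "A \<noteq> 0" using assms(5) A_def by simp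
  have "B = \<rho> * A" unfolding A_def B_def using assms(8,9) by (simp add: algebra_simps)
  then have rho: "\<rho> = B / A" using A0 by simp
  have ReA: "Re A \<in> BR (2*U^2) (U^2)" "Im A \<in> BR (2*U^2) (U^2)"
    "Re B \<in> BR (2*U^2) (U^2)" "Im B \<in> BR (2*U^2) (U^2)"
    unfolding A_def B_def using q T0 by (auto intro!: BR_add(2) simp: power2_eq_square)
  have m4: "Re B * Re A \<in> BR (4*U^4) (U^4)" "Im B * Im A \<in> BR (4*U^4) (U^4)"
    "Im B * Re A \<in> BR (4*U^4) (U^4)" "Re B * Im A \<in> BR (4*U^4) (U^4)"
    "Re A * Re A \<in> BR (4*U^4) (U^4)" "Im A * Im A \<in> BR (4*U^4) (U^4)"
    using ReA T1 by (auto intro!: BR_mult)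
  have m8: "Re B * Re A + Im B * Im A \<in> BR (8*U^8) (U^8)"
    "Im B * Re A - Re B * Im A \<in> BR (8*U^8) (U^8)"
    "(Re A)^2 + (Im A)^2 \<in> BR (8*U^8) (U^8)"
    using m4 T1 by (auto intro!: BR_add simp: power2_eq_square)
  have den: "(Re A)^2 + (Im A)^2 \<noteq> 0" using A0 by (simp add: complex_eq_iff add_nonneg_eq_0_iff)
  have r16: "Re \<rho> \<in> BR (8*U^16) (8*U^16)" "Im \<rho> \<in> BR (8*U^16) (8*U^16)"
    unfolding rho Re_divide Im_divide using m8 den T1 by (auto intro!: BR_divide)
  have r17: "Re \<rho> * Re a1 \<in> BR (8*U^17) (8*U^17)" "Im \<rho> * Im a1 \<in> BR (8*U^17) (8*U^17)"
     "Re \<rho> * Im a1 \<in> BR (8*U^17) (8*U^17)" "Im \<rho> * Re a1 \<in> BR (8*U^17) (8*U^17)"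
    using r16 q T1 by (auto intro!: BR_mult)
  have r34: "Re \<rho> * Re a1 - Im \<rho> * Im a1 \<in> BR (128*U^34) (64*U^34)"
     "Re \<rho> * Im a1 + Im \<rho> * Re a1 \<in> BR (128*U^34) (64*U^34)"
    using r17 T1 by (auto intro!: BR_add)
  have "t = b1 - \<rho> * a1" using assms(8) by simp
  then have tt: "Re t = Re b1 - (Re \<rho> * Re a1 - Im \<rho> * Im a1)"
     "Im t = Im b1 - (Re \<rho> * Im a1 + Im \<rho> * Re a1)" by simp_all
  have t35: "Re t \<in> BR (192*U^35) (64*U^35)" "Im t \<in> BR (192*U^35) (64*U^35)"
    unfolding tt using BR_add(2)[OF q(5) r34(1)] BR_add(2)[OF q(6) r34(2)] T1 by simp_all
  have "\<rho> \<in> QVi (2^10 * U^16)" unfolding QVi_def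
    using r16 by (auto intro!: BR_QV)
  moreover have "t \<in> QVi (2^22 * U^35)" unfolding QVi_def
    using t35 by (auto intro!: BR_QV)
  ultimately show ?thesis by simp
qed

end
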